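(* Let $D$ be an integral domain and $\star$ a semistar operation on $D$. The following are equivalent: (i) for every overring $T$ of $D$ and every semistar operation $\star'$ on $T$, $T$ is $(\star,\star')$-linked to $D$; (ii) every overring $T$ of $D$ is $(\star,d_T)$-linked to $D$; (iii) every overring $T$ of $D$ is $t$-linked to $(D,\star)$; (iv) for every valuation overring $V$ of $D$ there is a semistar operation $\ast_V$ on $V$ with $V^{\ast_V}=V$ such that $V$ is $(\star,\ast_V)$-linked to $D$; (v) every maximal ideal of $D$ is a quasi-$\star_f$-maximal ideal; (vi) for every proper ideal $I$ of $D$, $I^{\star_f}\subsetneq D^\star$; (vii) for every proper finitely generated ideal $I$ of $D$, $I^\star\subsetneq D^\star$; (viii) for every proper $\star_f$-invertible ideal $I$ of $D$ (i.e. $(II^{-1})^{\star_f}=D^\star$, where $I^{-1}=(D:_KI)$), $I^{\star_f}\subsetneq D^\star$.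
   Context: Let $D$ be an integral domain with quotient field $K$. $\overline{\mathbf F}(D)$ denotes the set of all nonzero $D$-submodules of $K$ and $\mathbf f(D)$ the set of nonzero finitely generated $D$-submodules of $K$. A semistar operation on $D$ is a map $\star:\overline{\mathbf F}(D)\to\overline{\mathbf F}(D)$, $E\mapsto E^\star$, such that for all $0\ne x\in K$ and $E,F\in\overline{\mathbf F}(D)$: (1) $(xE)^\star=xE^\star$; (2) $E\subseteq F\Rightarrow E^\star\subseteq F^\star$; (3) $E\subseteq E^\star$ and $(E^\star)^\star=E^\star$. $\star_f$ is defined by $E^{\star_f}=\bigcup\{F^\star:F\in\mathbf f(D),F\subseteq E\}$. A nonzero ideal $I$ of $D$ is a quasi-$\star$-ideal if $I^\star\cap D=I$; a quasi-$\star$-maximal ideal is a maximal element among proper quasi-$\star$-ideals. An overring of $D$ is a ring $T$ with $D\subseteq T\subseteq K$; semistar operations on $T$ are defined likewise. $d_T$ denotes the identity operation on $T$; $v_T$ is $E\mapsto(T:_K(T:_KE))$ and $t_T:=(v_T)_f$. If $\star'$ is a semistar operation on $T$, $T$ is $(\star,\star')$-linked to $D$ if for every nonzero finitely generated ideal $F\subseteq D$ with $F^\star=D^\star$ one has $(FT)^{\star'}=T^{\star'}$; $T$ is $t$-linked to $(D,\star)$ if it is $(\star,t_T)$-linked to $D$. *)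

theory Defs
  imports Main
begin

text \<open>We work inside a field K (the type 'a). Rings D, T are subsets of K.\<close>

definition subring :: "'a::field set \<Rightarrow> bool" where
  "subring R \<longleftrightarrow> 0 \<in> R \<and> 1 \<in> R \<and> (\<forall>x\<in>R. \<forall>y\<in>R. x + y \<in> R \<and> x - y \<in> R \<and> x * y \<in> R)"

definition quotient_field_is_UNIV :: "'a::field set \<Rightarrow> bool" where
  "quotient_field_is_UNIV D \<longleftrightarrow> (\<forall>x. \<exists>a\<in>D. \<exists>b\<in>D. b \<noteq> 0 \<and> x = a / b)"

definition overring :: "'a::field set \<Rightarrow> 'a set \<Rightarrow> bool" where
  "overring D T \<longleftrightarrow> subring T \<and> D \<subseteq> T"

definition valuation_overring :: "'a::field set \<Rightarrow> 'a set \<Rightarrow> bool" where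
  "valuation_overring D V \<longleftrightarrow> overring D V \<and> (\<forall>x. x \<noteq> 0 \<longrightarrow> x \<in> V \<or> inverse x \<in> V)"

definition submod :: "'a::field set \<Rightarrow> 'a set \<Rightarrow> bool" where
  "submod R E \<longleftrightarrow> 0 \<in> E \<and> (\<forall>x\<in>E. \<forall>y\<in>E. x + y \<in> E) \<and> (\<forall>r\<in>R. \<forall>x\<in>E. r * x \<in> E)"

definition nzsub :: "'a::field set \<Rightarrow> 'a set \<Rightarrow> bool" where
  "nzsub R E \<longleftrightarrow> submod R E \<and> E \<noteq> {0}"

definition rspan :: "'a::field set \<Rightarrow> 'a set \<Rightarrow> 'a set" where
  "rspan R S = {x. \<exists>A c. finite A \<and> A \<subseteq> S \<and> (\<forall>a\<in>A. c a \<in> R) \<and> x = (\<Sum>a\<in>A. c a * a)}"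

definition fgsub :: "'a::field set \<Rightarrow> 'a set \<Rightarrow> bool" where
  "fgsub R F \<longleftrightarrow> (\<exists>A. finite A \<and> F = rspan R A) \<and> F \<noteq> {0}"

definition mprod :: "'a::field set \<Rightarrow> 'a set \<Rightarrow> 'a set \<Rightarrow> 'a set" where
  "mprod R E F = rspan R {e * f | e f. e \<in> E \<and> f \<in> F}"

definition colon :: "'a::field set \<Rightarrow> 'a set \<Rightarrow> 'a set" where
  "colon R E = {x. \<forall>e\<in>E. x * e \<in> R}"

definition semistar :: "'a::field set \<Rightarrow> ('a set \<Rightarrow> 'a set) \<Rightarrow> bool" where
  "semistar R st \<longleftrightarrow>
     (\<forall>E. nzsub R E \<longrightarrow> nzsub R (st E)) \<and>
     (\<forall>E x. nzsub R E \<longrightarrow> x \<noteq> 0 \<longrightarrow> st ((\<lambda>e. x * e) ` E) = (\<lambda>e. x * e) ` st E) \<and>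
     (\<forall>E F. nzsub R E \<longrightarrow> nzsub R F \<longrightarrow> E \<subseteq> F \<longrightarrow> st E \<subseteq> st F) \<and>
     (\<forall>E. nzsub R E \<longrightarrow> E \<subseteq> st E \<and> st (st E) = st E)"

definition star_f :: "'a::field set \<Rightarrow> ('a set \<Rightarrow> 'a set) \<Rightarrow> 'a set \<Rightarrow> 'a set" where
  "star_f R st E = \<Union>{st F | F. fgsub R F \<and> F \<subseteq> E}"

definition v_op :: "'a::field set \<Rightarrow> 'a set \<Rightarrow> 'a set" where
  "v_op T E = colon T (colon T E)"

definition t_op :: "'a::field set \<Rightarrow> 'a set \<Rightarrow> 'a set" where
  "t_op T = star_f T (v_op T)"

definition d_op :: "'a::field set \<Rightarrow> 'a set \<Rightarrow> 'a set" where
  "d_op T E = E"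

definition ideal_of :: "'a::field set \<Rightarrow> 'a set \<Rightarrow> bool" where
  "ideal_of D I \<longleftrightarrow> I \<subseteq> D \<and> submod D I"

definition maximal_ideal :: "'a::field set \<Rightarrow> 'a set \<Rightarrow> bool" where
  "maximal_ideal D M \<longleftrightarrow> ideal_of D M \<and> M \<noteq> D \<and>
     (\<forall>J. ideal_of D J \<longrightarrow> M \<subseteq> J \<longrightarrow> J = M \<or> J = D)"

definition quasi_ideal :: "'a::field set \<Rightarrow> ('a set \<Rightarrow> 'a set) \<Rightarrow> 'a set \<Rightarrow> bool" where
  "quasi_ideal D st I \<longleftrightarrow> ideal_of D I \<and> I \<noteq> {0} \<and> st I \<inter> D = I"

definition quasi_maximal :: "'a::field set \<Rightarrow> ('a set \<Rightarrow> 'a set) \<Rightarrow> 'a set \<Rightarrow> bool" where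
  "quasi_maximal D st M \<longleftrightarrow> quasi_ideal D st M \<and> M \<noteq> D \<and>
     (\<forall>J. quasi_ideal D st J \<longrightarrow> J \<noteq> D \<longrightarrow> M \<subseteq> J \<longrightarrow> J = M)"

definition linked :: "'a::field set \<Rightarrow> ('a set \<Rightarrow> 'a set) \<Rightarrow> 'a set \<Rightarrow> ('a set \<Rightarrow> 'a set) \<Rightarrow> bool" where
  "linked D st T st' \<longleftrightarrow>
     (\<forall>F. fgsub D F \<longrightarrow> F \<subseteq> D \<longrightarrow> st F = st D \<longrightarrow> st' (rspan T F) = st' T)"

definition tfae :: "bool list \<Rightarrow> bool" where
  "tfae ps \<longleftrightarrow> (\<forall>i<length ps. \<forall>j<length ps. ps ! i = ps ! j)"

end

theory Submission
  imports Defs "HOL-Computational_Algebra.Polynomial"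
begin


lemma subringD:
  assumes "subring R"
  shows "0 \<in> R" "1 \<in> R" "x \<in> R \<Longrightarrow> y \<in> R \<Longrightarrow> x + y \<in> R"
    "x \<in> R \<Longrightarrow> y \<in> R \<Longrightarrow> x - y \<in> R" "x \<in> R \<Longrightarrow> y \<in> R \<Longrightarrow> x * y \<in> R"
  using assms unfolding subring_def by auto

lemma subring_uminus: "subring R \<Longrightarrow> x \<in> R \<Longrightarrow> - x \<in> R"
  by (metis subringD(1) subringD(4) diff_0)

lemma subring_sum: "subring R \<Longrightarrow> (\<And>i. i \<in> S \<Longrightarrow> f i \<in> R) \<Longrightarrow> sum f S \<in> R"
proof (induction S rule: infinite_finite_induct)
  case (infinite A) then show ?case by (simp add: subringD)
next
  case empty then show ?case by (simp add: subringD)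
next
  case (insert x F) then show ?case by (simp add: subringD)
qed

lemma subring_power: "subring R \<Longrightarrow> x \<in> R \<Longrightarrow> x ^ n \<in> R"
  by (induction n) (auto simp: subringD)

lemma submodD:
  assumes "submod R E"
  shows "0 \<in> E" "x \<in> E \<Longrightarrow> y \<in> E \<Longrightarrow> x + y \<in> E" "r \<in> R \<Longrightarrow> x \<in> E \<Longrightarrow> r * x \<in> E"
  using assms unfolding submod_def by auto

lemma submod_sum: "submod R E \<Longrightarrow> (\<And>i. i \<in> S \<Longrightarrow> f i \<in> E) \<Longrightarrow> sum f S \<in> E"
proof (induction S rule: infinite_finite_induct)
  case (infinite A) then show ?case by (simp add: submodD)
next
  case empty then show ?case by (simp add: submodD)
next
  case (insert x F) then show ?case by (simp add: submodD)
qed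

lemma submod_diff:
  assumes "submod R E" "subring R" "x \<in> E" "y \<in> E"
  shows "x - y \<in> E"
proof -
  have "(-1) * y \<in> E" using assms subring_uminus[OF assms(2) subringD(2)[OF assms(2)]] submodD(3) by blast
  then have "x + (-1) * y \<in> E" using assms submodD(2) by blast
  then show ?thesis by simp
qed

lemma submod_uminus:
  assumes "submod R E" "subring R" "y \<in> E"
  shows "- y \<in> E"
  using submod_diff[OF assms(1,2) submodD(1)[OF assms(1)] assms(3)] by simp

lemma rspanE:
  assumes "x \<in> rspan R S"
  obtains A c where "finite A" "A \<subseteq> S" "\<forall>a\<in>A. c a \<in> R" "x = (\<Sum>a\<in>A. c a * a)"
  using assms unfolding rspan_def mem_Collect_eq by (elim exE conjE) (rule that)

lemma rspan_submod:
  assumes "subring R" shows "submod R (rspan R S)"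
  unfolding submod_def
proof (intro conjI ballI)
  show "0 \<in> rspan R S" unfolding rspan_def by (rule CollectI, rule exI[of _ "{}"]) auto
next
  fix x y assume xy: "x \<in> rspan R S" "y \<in> rspan R S"
  obtain A c where A: "finite A" "A \<subseteq> S" "\<forall>a\<in>A. c a \<in> R" "x = (\<Sum>a\<in>A. c a * a)"
    using xy(1) by (rule rspanE)
  obtain B d where B: "finite B" "B \<subseteq> S" "\<forall>a\<in>B. d a \<in> R" "y = (\<Sum>a\<in>B. d a * a)"
    using xy(2) by (rule rspanE)
  define c' where "c' a = (if a \<in> A then c a else 0)" for a
  define d' where "d' a = (if a \<in> B then d a else 0)" for a
  define e where "e a = c' a + d' a" for a
  have fin: "finite (A \<union> B)" using A B by simp
  have x: "x = (\<Sum>a\<in>A \<union> B. c' a * a)"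
  proof -
    have "(\<Sum>a\<in>A \<union> B. c' a * a) = (\<Sum>a\<in>A. c' a * a)"
      by (rule sum.mono_neutral_right[OF fin]) (auto simp: c'_def)
    also have "\<dots> = x" unfolding A(4) by (rule sum.cong) (auto simp: c'_def)
    finally show ?thesis by simp
  qed
  have y: "y = (\<Sum>a\<in>A \<union> B. d' a * a)"
  proof -
    have "(\<Sum>a\<in>A \<union> B. d' a * a) = (\<Sum>a\<in>B. d' a * a)"
      by (rule sum.mono_neutral_right[OF fin]) (auto simp: d'_def)
    also have "\<dots> = y" unfolding B(4) by (rule sum.cong) (auto simp: d'_def)
    finally show ?thesis by simp
  qed
  have "x + y = (\<Sum>a\<in>A \<union> B. e a * a)"
    unfolding x y e_def by (simp add: distrib_right sum.distrib)
  moreover have "\<forall>a\<in>A \<union> B. e a \<in> R" using A B assms unfolding e_def c'_def d'_def by (auto simp: subringD)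
  ultimately show "x + y \<in> rspan R S" unfolding rspan_def
    by (intro CollectI exI[of _ "A \<union> B"] exI[of _ e]) (use A B in auto)
next
  fix r x assume r: "r \<in> R" and xs: "x \<in> rspan R S"
  obtain A c where A: "finite A" "A \<subseteq> S" "\<forall>a\<in>A. c a \<in> R" "x = (\<Sum>a\<in>A. c a * a)"
    using xs by (rule rspanE)
  have "r * x = (\<Sum>a\<in>A. (r * c a) * a)" using A by (simp add: sum_distrib_left mult.assoc)
  moreover have "\<forall>a\<in>A. r * c a \<in> R" using A r assms by (auto simp: subringD)
  ultimately show "r * x \<in> rspan R S" unfolding rspan_def
    by (intro CollectI exI[of _ "A"] exI[of _ "\<lambda>a. r * c a"]) (use A in auto)
qed

lemma rspan_least:
  assumes "submod R E" "S \<subseteq> E" shows "rspan R S \<subseteq> E"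
proof
  fix x assume "x \<in> rspan R S"
  then obtain A c where A: "finite A" "A \<subseteq> S" "\<forall>a\<in>A. c a \<in> R" "x = (\<Sum>a\<in>A. c a * a)"
    by (rule rspanE)
  show "x \<in> E" unfolding A(4) using A assms by (intro submod_sum[OF assms(1)]) (auto intro: submodD(3))
qed

lemma rspan_mult: "r \<in> R \<Longrightarrow> s \<in> S \<Longrightarrow> r * s \<in> rspan R S"
  unfolding rspan_def by (rule CollectI, rule exI[of _ "{s}"], rule exI[of _ "\<lambda>_. r"]) auto

lemma rspan_incl: "1 \<in> R \<Longrightarrow> S \<subseteq> rspan R S"
  using rspan_mult[of 1 R] by force

lemma rspan_mono_ring: "R \<subseteq> R' \<Longrightarrow> rspan R S \<subseteq> rspan R' S"
  unfolding rspan_def by blast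

lemma rspan_mono: "S \<subseteq> S' \<Longrightarrow> rspan R S \<subseteq> rspan R S'"
  unfolding rspan_def by blast

lemma rspan_idem: "subring R \<Longrightarrow> submod R E \<Longrightarrow> rspan R E = E"
  using rspan_least[of R E E] rspan_incl[of R E] subringD(2) by blast

lemma rspan_zero: "S \<subseteq> {0} \<Longrightarrow> rspan R S = {0}"
proof -
  assume S: "S \<subseteq> {0}"
  have "rspan R S \<subseteq> {0}"
    by (rule rspan_least) (use S in \<open>auto simp: submod_def\<close>)
  moreover have "0 \<in> rspan R S" unfolding rspan_def by (rule CollectI, rule exI[of _ "{}"]) auto
  ultimately show ?thesis by blast
qed

lemma submod_ring: "subring R \<Longrightarrow> submod R R"
  unfolding submod_def by (auto simp: subringD)

lemma nzsub_ring: "subring R \<Longrightarrow> nzsub R R"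
  unfolding nzsub_def using submod_ring subringD(2)[of R] by force

lemma fgsub_submod: "subring R \<Longrightarrow> fgsub R F \<Longrightarrow> submod R F"
  unfolding fgsub_def using rspan_submod by blast

lemma fgsub_nzsub: "subring R \<Longrightarrow> fgsub R F \<Longrightarrow> nzsub R F"
  unfolding nzsub_def using fgsub_submod fgsub_def by blast

lemma rspan_ring_overring: "subring T \<Longrightarrow> D \<subseteq> T \<Longrightarrow> 1 \<in> D \<Longrightarrow> rspan T D = T"
proof
  assume a: "subring T" "D \<subseteq> T" "1 \<in> D"
  show "rspan T D \<subseteq> T" by (rule rspan_least[OF submod_ring[OF a(1)] a(2)])
  show "T \<subseteq> rspan T D" using rspan_mult[of _ T 1 D] a(3) by force
qed

lemma ideal_one: "ideal_of D I \<Longrightarrow> 1 \<in> I \<Longrightarrow> I = D"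
  unfolding ideal_of_def submod_def by (metis mult.right_neutral subsetI subset_antisym)

lemma semistarD:
  assumes "semistar R st" "nzsub R E"
  shows "nzsub R (st E)" "E \<subseteq> st E" "st (st E) = st E"
    "x \<noteq> 0 \<Longrightarrow> st ((\<lambda>e. x * e) ` E) = (\<lambda>e. x * e) ` st E"
    "nzsub R F \<Longrightarrow> F \<subseteq> E \<Longrightarrow> st F \<subseteq> st E"
  using assms unfolding semistar_def by auto

lemma one_in_star:
  assumes "subring D" "semistar D st" "nzsub D G" "G \<subseteq> D" "1 \<in> st G"
  shows "st G = st D"
proof -
  have sG: "nzsub D (st G)" using semistarD(1)[OF assms(2,3)] .
  have "D \<subseteq> st G" using sG assms(5) unfolding nzsub_def submod_def by (metis mult.right_neutral subsetI)
  then have "st D \<subseteq> st (st G)" using semistarD(5)[OF assms(2) sG nzsub_ring[OF assms(1)]] by blast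
  then have "st D \<subseteq> st G" using semistarD(3)[OF assms(2,3)] by simp
  moreover have "st G \<subseteq> st D" using semistarD(5)[OF assms(2) nzsub_ring[OF assms(1)] assms(3,4)] .
  ultimately show ?thesis by blast
qed



definition polyring :: "'a::field set \<Rightarrow> 'a \<Rightarrow> 'a set" where
  "polyring R z = {poly p z | p. \<forall>i. coeff p i \<in> R}"

lemma polyring_subring:
  assumes R: "subring R" shows "subring (polyring R z)"
  unfolding subring_def
proof (intro conjI ballI)
  show "0 \<in> polyring R z" unfolding polyring_def
    by (rule CollectI, rule exI[of _ 0]) (simp add: subringD[OF R])
  show "1 \<in> polyring R z" unfolding polyring_def
    by (rule CollectI, rule exI[of _ 1]) (simp add: subringD[OF R] coeff_1)
  fix x y assume x: "x \<in> polyring R z" and y: "y \<in> polyring R z"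
  obtain p where p: "\<forall>i. coeff p i \<in> R" "x = poly p z" using x unfolding polyring_def by blast
  obtain q where q: "\<forall>i. coeff q i \<in> R" "y = poly q z" using y unfolding polyring_def by blast
  show "x + y \<in> polyring R z" unfolding polyring_def
    by (rule CollectI, rule exI[of _ "p + q"]) (simp add: p q subringD[OF R])
  show "x - y \<in> polyring R z" unfolding polyring_def
    by (rule CollectI, rule exI[of _ "p - q"]) (simp add: p q subringD[OF R])
  have "\<forall>i. coeff (p * q) i \<in> R" unfolding coeff_mult
    by (intro allI subring_sum[OF R]) (simp add: p q subringD[OF R])
  then show "x * y \<in> polyring R z" unfolding polyring_def
    by (intro CollectI exI[of _ "p * q"]) (simp add: p q)
qed

lemma polyring_incl: "subring R \<Longrightarrow> R \<subseteq> polyring R z"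
proof
  fix r assume R: "subring R" and r: "r \<in> R"
  show "r \<in> polyring R z" unfolding polyring_def
    by (rule CollectI, rule exI[of _ "[:r:]"]) (simp add: r subringD[OF R] coeff_pCons split: nat.split)
qed

lemma polyring_var: "subring R \<Longrightarrow> z \<in> polyring R z"
  unfolding polyring_def
  by (rule CollectI, rule exI[of _ "[:0,1:]"]) (simp add: subringD coeff_pCons split: nat.split)

lemma poly_in_ideal:
  assumes R: "subring R" and I: "submod R I" and q: "\<forall>i. coeff q i \<in> I" and y: "y \<in> R"
  shows "poly q y \<in> I"
  using q
proof (induction q)
  case 0 then show ?case using submodD(1)[OF I] by simp
next
  case (pCons a p)
  have "\<forall>i. coeff p i \<in> I" using pCons.prems by (metis coeff_pCons_Suc)
  then have "poly p y \<in> I" using pCons.IH by blast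
  moreover have "a \<in> I" using pCons.prems by (metis coeff_pCons_0)
  ultimately show ?case using submodD[OF I] y by simp
qed

lemma one_in_polyring_span:
  assumes R: "subring R" and one: "1 \<in> rspan (polyring R z) A"
  shows "\<exists>q. (\<forall>i. coeff q i \<in> rspan R A) \<and> poly q z = 1"
proof -
  obtain B c where B: "finite B" "B \<subseteq> A" "\<forall>a\<in>B. c a \<in> polyring R z" "1 = (\<Sum>a\<in>B. c a * a)"
    using one by (rule rspanE)
  have "\<forall>a\<in>B. \<exists>p. (\<forall>i. coeff p i \<in> R) \<and> c a = poly p z"
    using B(3) unfolding polyring_def by blast
  then obtain p where p: "\<And>a. a \<in> B \<Longrightarrow> (\<forall>i. coeff (p a) i \<in> R) \<and> c a = poly (p a) z"
    by metis
  define q where "q = (\<Sum>a\<in>B. smult a (p a))"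
  have "poly q z = (\<Sum>a\<in>B. c a * a)" unfolding q_def poly_sum
    by (rule sum.cong) (auto simp: p)
  moreover have "\<forall>i. coeff q i \<in> rspan R A"
  proof
    fix i
    have "coeff q i = (\<Sum>a\<in>B. coeff (p a) i * a)" unfolding q_def coeff_sum
      by (rule sum.cong) auto
    also have "\<dots> \<in> rspan R A"
      by (rule submod_sum[OF rspan_submod[OF R]]) (use B p in \<open>auto intro: rspan_mult\<close>)
    finally show "coeff q i \<in> rspan R A" .
  qed
  ultimately show ?thesis using B(4) by auto
qed

section \<open>Local setting: maximal ring\<close>

locale vsetting =
  fixes V :: "'a::field set" and I :: "'a set"
  assumes V: "subring V" and I: "submod V I" and IV: "I \<subseteq> V" and one: "1 \<notin> I"
    and H: "\<And>z. z \<notin> V \<Longrightarrow> \<exists>q. (\<forall>i. coeff q i \<in> I) \<and> poly q z = 1"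
begin

lemma unit: assumes b: "b \<in> I" shows "inverse (1 - b) \<in> V"
proof (rule ccontr)
  assume nv: "inverse (1 - b) \<notin> V"
  define w where "w = 1 - b"
  have w0: "w \<noteq> 0" using b one unfolding w_def by auto
  have wV: "w \<in> V" unfolding w_def using b IV V by (auto intro: subringD)
  obtain q where q: "\<forall>i. coeff q i \<in> I" "poly q (inverse w) = 1" using H nv unfolding w_def by blast
  have "poly (reflect_poly q) w = w ^ degree q" using poly_reflect_poly_nz[OF w0, of q] q(2) by simp
  moreover have "\<forall>i. coeff (reflect_poly q) i \<in> I" using q(1) submodD(1)[OF I]
    by (simp add: coeff_reflect_poly)
  ultimately have wk: "w ^ degree q \<in> I" using poly_in_ideal[OF V I _ wV] by metis
  have "\<And>k. w ^ k - 1 \<in> I"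
  proof -
    fix k show "w ^ k - 1 \<in> I"
    proof (induction k)
      case 0 then show ?case using submodD(1)[OF I] by simp
    next
      case (Suc k)
      have eq: "w ^ Suc k - 1 = w * (w ^ k - 1) + (- b)" unfolding w_def by (simp add: algebra_simps)
      have "w * (w ^ k - 1) \<in> I" using Suc submodD(3)[OF I wV] by blast
      moreover have "- b \<in> I" using submod_uminus[OF I V b] .
      ultimately show ?case unfolding eq using submodD(2)[OF I] by blast
    qed
  qed
  then have "w ^ degree q - (w ^ degree q - 1) \<in> I" using submod_diff[OF I V wk] by blast
  then show False using one by simp
qed

definition inP :: "'a \<Rightarrow> nat \<Rightarrow> 'a \<Rightarrow> bool" where
  "inP w k y \<longleftrightarrow> (\<exists>p. (\<forall>i. coeff p i \<in> I) \<and> degree p \<le> k \<and> poly p w = y)"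

lemma inP_add: "inP w k y1 \<Longrightarrow> inP w k y2 \<Longrightarrow> inP w k (y1 + y2)"
proof -
  assume "inP w k y1" "inP w k y2"
  then obtain p1 p2 where "\<forall>i. coeff p1 i \<in> I" "degree p1 \<le> k" "poly p1 w = y1"
    "\<forall>i. coeff p2 i \<in> I" "degree p2 \<le> k" "poly p2 w = y2" unfolding inP_def by blast
  then show ?thesis unfolding inP_def
    by (intro exI[of _ "p1 + p2"]) (auto simp: submodD[OF I] degree_add_le)
qed

lemma inP_smult: "v \<in> V \<Longrightarrow> inP w k y \<Longrightarrow> inP w k (v * y)"
proof -
  assume v: "v \<in> V" and "inP w k y"
  then obtain p where "\<forall>i. coeff p i \<in> I" "degree p \<le> k" "poly p w = y" unfolding inP_def by blast
  then show ?thesis unfolding inP_def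
    by (intro exI[of _ "smult v p"]) (auto simp: submodD[OF I] v intro: order.trans[OF degree_smult_le])
qed

lemma inP_shift: "inP w k y \<Longrightarrow> inP w (Suc k) (w * y)"
proof -
  assume "inP w k y"
  then obtain p where p: "\<forall>i. coeff p i \<in> I" "degree p \<le> k" "poly p w = y" unfolding inP_def by blast
  have "\<forall>i. coeff (pCons 0 p) i \<in> I" using p(1) submodD(1)[OF I] by (auto simp: coeff_pCons split: nat.split)
  moreover have "degree (pCons 0 p) \<le> Suc k" using p(2) degree_pCons_le[of 0 p] by linarith
  ultimately show ?thesis unfolding inP_def using p(3) by (intro exI[of _ "pCons 0 p"]) auto
qed

lemma inP_pow: "inP w k y \<Longrightarrow> inP w (k + j) (w ^ j * y)"
proof (induction j)
  case 0 then show ?case by simp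
next
  case (Suc j)
  then have "inP w (Suc (k + j)) (w * (w ^ j * y))" using inP_shift by blast
  then show ?case by (simp add: mult.assoc)
qed

definition Rep :: "'a \<Rightarrow> nat \<Rightarrow> bool" where
  "Rep w n \<longleftrightarrow> inP w n 1"

lemma Rep0: "\<not> Rep w 0"
proof
  assume "Rep w 0"
  then obtain p where p: "\<forall>i. coeff p i \<in> I" "degree p \<le> 0" "poly p w = 1" unfolding Rep_def inP_def by blast
  define c where "c = coeff p 0"
  have pc: "p = [:c:]" unfolding c_def using degree_0_id[of p] p(2) by simp
  have "poly p w = c" by (simp add: pc)
  moreover have "c \<in> I" unfolding c_def using p(1) by blast
  ultimately show False using p one by simp
qed

lemma reduce:
  assumes w0: "w \<noteq> 0" and n: "Rep w n" and m: "Rep (inverse w) m" and mn: "m \<le> n"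
  shows "Rep w (n - 1)"
proof -
  obtain q where q: "\<forall>i. coeff q i \<in> I" "degree q \<le> n" "poly q w = 1" using n unfolding Rep_def inP_def by blast
  obtain r where r: "\<forall>i. coeff r i \<in> I" "degree r \<le> m" "poly r (inverse w) = 1" using m unfolding Rep_def inP_def by blast
  define b0 where "b0 = coeff r 0"
  have b0I: "b0 \<in> I" using r(1) unfolding b0_def by blast
  define u where "u = inverse (1 - b0)"
  have uV: "u \<in> V" unfolding u_def using unit[OF b0I] .
  have b01: "1 - b0 \<noteq> 0" using b0I one by auto
  define r1 where "r1 = r - [:b0:]"
  have r1_0: "coeff r1 0 = 0" unfolding r1_def b0_def by simp
  obtain a r2 where r12: "r1 = pCons a r2" by (cases r1) 
  have a0: "a = 0" using r1_0 r12 by simp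
  have pr1: "poly r1 (inverse w) = 1 - b0" unfolding r1_def using r(3) by simp
  have pr2: "inverse w * poly r2 (inverse w) = 1 - b0" using pr1 r12 a0 by simp
  have r2nz: "r2 \<noteq> 0" using pr2 b01 by auto
  have "degree r1 \<le> m" unfolding r1_def using r(2) by (intro degree_diff_le) auto
  then have dr2: "Suc (degree r2) \<le> m" using r12 r2nz by (simp add: degree_pCons_eq)
  define d where "d = degree r2"
  have r2I: "\<forall>i. coeff r2 i \<in> I"
  proof
    fix i
    have "coeff r2 i = coeff r1 (Suc i)" using r12 by simp
    also have "\<dots> = coeff r (Suc i)" unfolding r1_def by (simp add: coeff_pCons)
    finally show "coeff r2 i \<in> I" using r(1) by simp
  qed
  have "inP w d (w ^ d * poly r2 (inverse w))" unfolding inP_def d_def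
    using poly_reflect_poly_nz[OF w0, of r2] degree_reflect_poly_le[of r2] r2I submodD(1)[OF I]
    by (intro exI[of _ "reflect_poly r2"]) (auto simp: coeff_reflect_poly)
  then have "inP w (d + (m - 1 - d)) (w ^ (m - 1 - d) * (w ^ d * poly r2 (inverse w)))" by (rule inP_pow)
  moreover have e1: "d + (m - 1 - d) = m - 1" using dr2 unfolding d_def by simp
  moreover have e0: "w ^ (m - 1 - d) * w ^ d = w ^ (m - 1)"
    using dr2 unfolding d_def power_add[symmetric] by (metis add.commute e1 d_def)
  moreover have "w ^ (m - 1 - d) * (w ^ d * poly r2 (inverse w)) = w ^ (m - 1) * poly r2 (inverse w)"
    by (simp only: mult.assoc[symmetric] e0)
  ultimately have "inP w (m - 1) (w ^ (m - 1) * poly r2 (inverse w))" by metis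
  moreover have "w ^ (m - 1) * poly r2 (inverse w) = w ^ m * (1 - b0)"
  proof -
    have "w ^ m = w ^ (m - 1) * w" using dr2 by (metis Suc_le_D diff_Suc_1 power_Suc2)
    then have "w ^ m * (1 - b0) = w ^ (m - 1) * (w * (inverse w * poly r2 (inverse w)))"
      using pr2 by (simp add: mult.assoc)
    also have "\<dots> = w ^ (m - 1) * poly r2 (inverse w)" using w0 by (simp add: mult.assoc[symmetric])
    finally show ?thesis by simp
  qed
  ultimately have "inP w (m - 1) (u * (w ^ m * (1 - b0)))" using inP_smult[OF uV] by simp
  moreover have "u * (w ^ m * (1 - b0)) = w ^ m" unfolding u_def using b01 by simp
  ultimately have "inP w (m - 1) (w ^ m)" by simp
  then have "inP w (m - 1 + (n - m)) (w ^ (n - m) * w ^ m)" by (rule inP_pow)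
  moreover have "m - 1 + (n - m) = n - 1" using dr2 mn by simp
  moreover have "w ^ (n - m) * w ^ m = w ^ n" using mn by (simp add: power_add[symmetric])
  ultimately have wn: "inP w (n - 1) (w ^ n)" by simp
  define an where "an = coeff q n"
  have anV: "an \<in> V" unfolding an_def using q(1) IV by blast
  define q' where "q' = q - monom an n"
  have "\<forall>i. coeff q' i \<in> I" unfolding q'_def using q(1) submod_diff[OF I V] submodD(1)[OF I]
    by (auto simp: an_def)
  moreover have "degree q' \<le> n - 1"
  proof (rule degree_le, intro allI impI)
    fix i assume i: "n - 1 < i"
    show "coeff q' i = 0"
    proof (cases "i = n")
      case True then show ?thesis unfolding q'_def an_def by simp
    next
      case False
      then have "n < i" using i by simp
      then have "coeff q i = 0" using q(2) by (intro coeff_eq_0) simp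
      then show ?thesis unfolding q'_def using False by simp
    qed
  qed
  moreover have "poly q' w = 1 - an * w ^ n" unfolding q'_def using q(3) by (simp add: poly_monom)
  ultimately have "inP w (n - 1) (1 - an * w ^ n)" unfolding inP_def by blast
  moreover have "inP w (n - 1) (an * w ^ n)" using inP_smult[OF anV wn] .
  ultimately have "inP w (n - 1) ((1 - an * w ^ n) + an * w ^ n)" by (rule inP_add)
  then show ?thesis unfolding Rep_def by simp
qed

lemma valuation: assumes x0: "x \<noteq> 0" shows "x \<in> V \<or> inverse x \<in> V"
proof (rule ccontr)
  assume "\<not> (x \<in> V \<or> inverse x \<in> V)"
  then have nx: "x \<notin> V" and nix: "inverse x \<notin> V" by auto
  have ex1: "\<exists>n. Rep x n"
  proof -
    obtain q where "\<forall>i. coeff q i \<in> I" "poly q x = 1" using H[OF nx] by blast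
    then show ?thesis unfolding Rep_def inP_def by blast
  qed
  have ex2: "\<exists>n. Rep (inverse x) n"
  proof -
    obtain q where "\<forall>i. coeff q i \<in> I" "poly q (inverse x) = 1" using H[OF nix] by blast
    then show ?thesis unfolding Rep_def inP_def by blast
  qed
  define n where "n = (LEAST n. Rep x n)"
  define m where "m = (LEAST m. Rep (inverse x) m)"
  have n: "Rep x n" unfolding n_def using ex1 by (metis LeastI)
  have m: "Rep (inverse x) m" unfolding m_def using ex2 by (metis LeastI)
  have n1: "n \<noteq> 0" using n Rep0 by metis
  have m1: "m \<noteq> 0" using m Rep0 by metis
  show False
  proof (cases "m \<le> n")
    case True
    then have "Rep x (n - 1)" using reduce[OF x0 n m] by blast
    then have "n \<le> n - 1" unfolding n_def by (rule Least_le)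
    then show False using n1 by simp
  next
    case False
    have "Rep (inverse x) (m - 1)" using reduce[of "inverse x" m n] m n False x0 by simp
    then have "m \<le> m - 1" unfolding m_def by (rule Least_le)
    then show False using m1 by simp
  qed
qed

end

lemma valuation_exists:
  fixes D :: "'a::field set"
  assumes D: "subring D" and A: "finite A" "A \<subseteq> D" and one: "1 \<notin> rspan D A"
  shows "\<exists>V. valuation_overring D V \<and> 1 \<notin> rspan V A"
proof -
  define S where "S = {R. subring R \<and> D \<subseteq> R \<and> 1 \<notin> rspan R A}"
  have "\<exists>M\<in>S. \<forall>X\<in>S. M \<subseteq> X \<longrightarrow> X = M"
  proof (rule subset_Zorn_nonempty)
    show "S \<noteq> {}" using D one unfolding S_def by blast
  next
    fix C assume C: "C \<noteq> {}" "subset.chain S C"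
    have CS: "C \<subseteq> S" and ch: "\<forall>X\<in>C. \<forall>Y\<in>C. X \<subseteq> Y \<or> Y \<subseteq> X" using C(2) by (auto simp: subset_chain_def)
    obtain R0 where R0: "R0 \<in> C" using C(1) by blast
    have sub: "subring (\<Union>C)" unfolding subring_def
    proof (intro conjI ballI)
      have "subring R0" using R0 CS unfolding S_def by blast
      then show "0 \<in> \<Union>C" "1 \<in> \<Union>C" using R0 subringD(1,2) by blast+
      fix x y assume "x \<in> \<Union>C" "y \<in> \<Union>C"
      then obtain X Y where XY: "X \<in> C" "Y \<in> C" "x \<in> X" "y \<in> Y" by blast
      then obtain Z where Z: "Z \<in> C" "x \<in> Z" "y \<in> Z" using ch by blast
      then have "subring Z" using CS unfolding S_def by blast
      then have "x + y \<in> Z" "x - y \<in> Z" "x * y \<in> Z" using Z subringD(3,4,5) by blast+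
      then show "x + y \<in> \<Union>C" "x - y \<in> \<Union>C" "x * y \<in> \<Union>C" using Z(1) by blast+
    qed
    have "D \<subseteq> \<Union>C" using R0 CS unfolding S_def by blast
    moreover have "1 \<notin> rspan (\<Union>C) A"
    proof
      assume "1 \<in> rspan (\<Union>C) A"
      then obtain B c where B: "finite B" "B \<subseteq> A" "\<forall>a\<in>B. c a \<in> \<Union>C" "1 = (\<Sum>a\<in>B. c a * a)"
        by (rule rspanE)
      obtain Z where Z: "Z \<in> C" "c ` B \<subseteq> Z"
        using finite_subset_Union_chain[of "c ` B" C S] B C by blast
      have "1 \<in> rspan Z A" unfolding rspan_def
        by (intro CollectI exI[of _ B] exI[of _ c]) (use B Z in auto)
      then show False using Z CS unfolding S_def by blast
    qed
    ultimately show "\<Union>C \<in> S" using sub unfolding S_def by blast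
  qed
  then obtain V where VS: "V \<in> S" and Vmax: "\<And>X. X \<in> S \<Longrightarrow> V \<subseteq> X \<Longrightarrow> X = V" by blast
  have Vp: "subring V" "D \<subseteq> V" "1 \<notin> rspan V A" using VS unfolding S_def by auto
  interpret vsetting V "rspan V A"
  proof
    show "subring V" by (rule Vp(1))
    show "submod V (rspan V A)" by (rule rspan_submod[OF Vp(1)])
    show "rspan V A \<subseteq> V" by (rule rspan_least[OF submod_ring[OF Vp(1)]]) (use A Vp in auto)
    show "1 \<notin> rspan V A" by (rule Vp(3))
    fix z assume z: "z \<notin> V"
    have "polyring V z \<notin> S"
    proof
      assume "polyring V z \<in> S"
      then have "polyring V z = V" using Vmax polyring_incl[OF Vp(1)] by blast
      then show False using polyring_var[OF Vp(1), of z] z by simp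
    qed
    moreover have "subring (polyring V z)" "D \<subseteq> polyring V z"
      using polyring_subring[OF Vp(1)] polyring_incl[OF Vp(1)] Vp(2) by blast+
    ultimately have "1 \<in> rspan (polyring V z) A" unfolding S_def by blast
    then show "\<exists>q. (\<forall>i. coeff q i \<in> rspan V A) \<and> poly q z = 1"
      by (rule one_in_polyring_span[OF Vp(1)])
  qed
  have val: "\<forall>x. x \<noteq> 0 \<longrightarrow> x \<in> V \<or> inverse x \<in> V" using valuation by simp
  have "valuation_overring D V"
    unfolding valuation_overring_def overring_def using Vp(1,2) val by simp
  then show ?thesis using Vp(3) by (intro exI[of _ V]) simp
qed



lemma tfae8:
  assumes "a = q" "b = q" "c = q" "d = q" "e = q" "f = q" "g = q" "h = q"
  shows "tfae [a, b, c, d, e, f, g, h]"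
proof -
  have all: "\<forall>x\<in>set [a, b, c, d, e, f, g, h]. x = q" using assms by simp
  show ?thesis unfolding tfae_def
  proof (intro allI impI)
    fix i j assume "i < length [a, b, c, d, e, f, g, h]" "j < length [a, b, c, d, e, f, g, h]"
    then show "[a, b, c, d, e, f, g, h] ! i = [a, b, c, d, e, f, g, h] ! j"
      using all nth_mem by metis
  qed
qed

lemma principal_gen:
  assumes V: "subring V" and val: "\<forall>x. x \<noteq> 0 \<longrightarrow> x \<in> V \<or> inverse x \<in> V"
    and B: "finite B" and nz: "\<exists>b\<in>B. b \<noteq> 0"
  shows "\<exists>g\<in>B. g \<noteq> 0 \<and> (\<forall>b\<in>B. b * inverse g \<in> V)"
  using B nz
proof (induction B rule: finite_induct)
  case empty then show ?case by simp
next
  case (insert a B)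
  show ?case
  proof (cases "\<exists>b\<in>B. b \<noteq> 0")
    case False
    then have a0: "a \<noteq> 0" using insert.prems by auto
    have "\<forall>b\<in>insert a B. b * inverse a \<in> V" using False a0 subringD(1,2)[OF V] by auto
    then show ?thesis using a0 by blast
  next
    case True
    then obtain g where g: "g \<in> B" "g \<noteq> 0" "\<forall>b\<in>B. b * inverse g \<in> V" using insert.IH by blast
    show ?thesis
    proof (cases "a * inverse g \<in> V")
      case True
      then show ?thesis using g by auto
    next
      case False
      then have a0: "a \<noteq> 0" using subringD(1)[OF V] by auto
      have "a * inverse g \<noteq> 0" using a0 g(2) by simp
      then have "inverse (a * inverse g) \<in> V" using val False by blast
      moreover have "inverse (a * inverse g) = g * inverse a" by (simp add: inverse_mult_distrib mult.commute)
      ultimately have ga: "g * inverse a \<in> V" by (simp add: mult.commute)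
      have "\<forall>b\<in>B. b * inverse a \<in> V"
      proof
        fix b assume "b \<in> B"
        then have "(b * inverse g) * (g * inverse a) \<in> V" using g ga subringD(5)[OF V] by blast
        then show "b * inverse a \<in> V" using g(2) by (simp add: field_simps)
      qed
      moreover have "a * inverse a \<in> V" using a0 subringD(2)[OF V] by simp
      ultimately show ?thesis using a0 by blast
    qed
  qed
qed

lemma submod_principal:
  assumes V: "subring V" shows "submod V ((\<lambda>e. g * e) ` V)"
  unfolding submod_def
proof (intro conjI ballI)
  show "0 \<in> (\<lambda>e. g * e) ` V" using subringD(1)[OF V] by force
  fix x y assume "x \<in> (\<lambda>e. g * e) ` V" "y \<in> (\<lambda>e. g * e) ` V"
  then obtain a b where "a \<in> V" "b \<in> V" "x = g * a" "y = g * b" by blast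
  then show "x + y \<in> (\<lambda>e. g * e) ` V" using subringD(3)[OF V]
    by (intro image_eqI[of _ _ "a + b"]) (auto simp: distrib_left)
next
  fix r x assume "r \<in> V" "x \<in> (\<lambda>e. g * e) ` V"
  then obtain a where "a \<in> V" "x = g * a" "r \<in> V" by blast
  then show "r * x \<in> (\<lambda>e. g * e) ` V" using subringD(5)[OF V]
    by (intro image_eqI[of _ _ "r * a"]) (auto simp: mult.left_commute)
qed

lemma span_in_principal:
  assumes V: "subring V" and g: "g \<noteq> 0" and B: "\<forall>b\<in>B. b * inverse g \<in> V"
  shows "rspan V B \<subseteq> (\<lambda>e. g * e) ` V"
proof (rule rspan_least[OF submod_principal[OF V]])
  show "B \<subseteq> (\<lambda>e. g * e) ` V"
  proof
    fix b assume "b \<in> B"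
    then show "b \<in> (\<lambda>e. g * e) ` V" using B g by (intro image_eqI[of _ _ "b * inverse g"]) auto
  qed
qed

lemma bad_val:
  assumes D: "subring D" and I: "ideal_of D I" "fgsub D I" "I \<noteq> D"
  shows "\<exists>V g. valuation_overring D V \<and> subring V \<and> g \<noteq> 0 \<and>
           rspan V I = (\<lambda>e. g * e) ` V \<and> 1 \<notin> rspan V I"
proof -
  obtain A where A: "finite A" "I = rspan D A" "I \<noteq> {0}" using I(2) unfolding fgsub_def by blast
  have one: "1 \<notin> I" using ideal_one I by blast
  have AD: "A \<subseteq> D" using A(2) rspan_incl[OF subringD(2)[OF D], of A] I(1) unfolding ideal_of_def by blast
  obtain V where V: "valuation_overring D V" "1 \<notin> rspan V A"
    using valuation_exists[OF D A(1) AD] one A(2) by blast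
  have Vs: "subring V" and DV: "D \<subseteq> V" and val: "\<forall>x. x \<noteq> 0 \<longrightarrow> x \<in> V \<or> inverse x \<in> V"
    using V(1) unfolding valuation_overring_def overring_def by auto
  have "\<exists>b\<in>A. b \<noteq> 0"
  proof (rule ccontr)
    assume "\<not> (\<exists>b\<in>A. b \<noteq> 0)"
    then have "A \<subseteq> {0}" by blast
    then show False using A rspan_zero by metis
  qed
  then obtain g where g: "g \<in> A" "g \<noteq> 0" "\<forall>b\<in>A. b * inverse g \<in> V"
    using principal_gen[OF Vs val A(1)] by blast
  have IVA: "I \<subseteq> rspan V A" unfolding A(2) by (rule rspan_mono_ring[OF DV])
  have sub1: "rspan V I \<subseteq> rspan V A" by (rule rspan_least[OF rspan_submod[OF Vs] IVA])
  have "rspan V A \<subseteq> (\<lambda>e. g * e) ` V" by (rule span_in_principal[OF Vs g(2,3)])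
  then have "rspan V I \<subseteq> (\<lambda>e. g * e) ` V" using sub1 by blast
  moreover have "(\<lambda>e. g * e) ` V \<subseteq> rspan V I"
  proof
    fix x assume "x \<in> (\<lambda>e. g * e) ` V"
    then obtain v where v: "v \<in> V" "x = g * v" by blast
    have "g \<in> I" using g(1) rspan_incl[OF subringD(2)[OF D], of A] A(2) by blast
    then have "v * g \<in> rspan V I" using rspan_mult v by blast
    then show "x \<in> rspan V I" using v by (simp add: mult.commute)
  qed
  ultimately have "rspan V I = (\<lambda>e. g * e) ` V" by blast
  moreover have "1 \<notin> rspan V I" using sub1 V(2) by blast
  ultimately show ?thesis using V(1) Vs g(2) by blast
qed

lemma t_op_one: assumes V: "subring V" shows "1 \<in> t_op V V"
proof -
  have "rspan V {1} = V" using rspan_ring_overring[OF V, of "{1}"] subringD(2)[OF V] by simp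
  moreover have "V \<noteq> {0}" using subringD(2)[OF V] by auto
  ultimately have "fgsub V V" unfolding fgsub_def by (metis finite.emptyI finite.insertI)
  moreover have "1 \<in> v_op V V" unfolding v_op_def colon_def
    using subringD(2)[OF V] by (simp, metis mult.right_neutral)
  ultimately show ?thesis unfolding t_op_def star_f_def by blast
qed

lemma t_op_not_one:
  assumes V: "subring V" and val: "\<forall>x. x \<noteq> 0 \<longrightarrow> x \<in> V \<or> inverse x \<in> V"
    and E: "submod V E" and one: "1 \<notin> E"
  shows "1 \<notin> t_op V E"
proof
  assume "1 \<in> t_op V E"
  then obtain G where G: "fgsub V G" "G \<subseteq> E" "1 \<in> v_op V G" unfolding t_op_def star_f_def by blast
  obtain B where B: "finite B" "G = rspan V B" "G \<noteq> {0}" using G(1) unfolding fgsub_def by blast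
  have "\<exists>b\<in>B. b \<noteq> 0"
  proof (rule ccontr)
    assume "\<not> (\<exists>b\<in>B. b \<noteq> 0)"
    then have "B \<subseteq> {0}" by blast
    then show False using B rspan_zero by metis
  qed
  then obtain h where h: "h \<in> B" "h \<noteq> 0" "\<forall>b\<in>B. b * inverse h \<in> V"
    using principal_gen[OF V val B(1)] by blast
  have Gh: "G \<subseteq> (\<lambda>e. h * e) ` V" unfolding B(2) by (rule span_in_principal[OF V h(2,3)])
  have "inverse h \<in> colon V G" unfolding colon_def
  proof (intro CollectI ballI)
    fix e assume "e \<in> G"
    then obtain v where "v \<in> V" "e = h * v" using Gh by blast
    then show "inverse h * e \<in> V" using h(2) by (simp add: mult.assoc[symmetric])
  qed
  then have ihV: "inverse h \<in> V" using G(3) unfolding v_op_def colon_def by fastforce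
  have "h \<in> G" unfolding B(2) using rspan_incl[OF subringD(2)[OF V]] h(1) by blast
  then have "inverse h * h \<in> E" using G(2) submodD(3)[OF E ihV] by blast
  then show False using one h(2) by simp
qed

lemma maximal_exists:
  assumes D: "subring D" and I: "ideal_of D I" "1 \<notin> I"
  shows "\<exists>M. maximal_ideal D M \<and> I \<subseteq> M"
proof -
  define S where "S = {J. ideal_of D J \<and> I \<subseteq> J \<and> 1 \<notin> J}"
  have "\<exists>M\<in>S. \<forall>X\<in>S. M \<subseteq> X \<longrightarrow> X = M"
  proof (rule subset_Zorn_nonempty)
    show "S \<noteq> {}" using I unfolding S_def by blast
  next
    fix C assume C: "C \<noteq> {}" "subset.chain S C"
    have CS: "C \<subseteq> S" and ch: "\<forall>X\<in>C. \<forall>Y\<in>C. X \<subseteq> Y \<or> Y \<subseteq> X" using C(2) by (auto simp: subset_chain_def)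
    obtain R0 where R0: "R0 \<in> C" using C(1) by blast
    have idl: "\<And>J. J \<in> C \<Longrightarrow> ideal_of D J" using CS unfolding S_def by blast
    have "submod D (\<Union>C)" unfolding submod_def
    proof (intro conjI ballI)
      show "0 \<in> \<Union>C" using idl[OF R0] R0 unfolding ideal_of_def submod_def by blast
      fix x y assume "x \<in> \<Union>C" "y \<in> \<Union>C"
      then obtain X Y where XY: "X \<in> C" "Y \<in> C" "x \<in> X" "y \<in> Y" by blast
      then obtain Z where Z: "Z \<in> C" "x \<in> Z" "y \<in> Z" using ch by blast
      then have "x + y \<in> Z" using idl[OF Z(1)] unfolding ideal_of_def submod_def by blast
      then show "x + y \<in> \<Union>C" using Z(1) by blast
    next
      fix r x assume "r \<in> D" "x \<in> \<Union>C"
      then obtain Z where Z: "Z \<in> C" "x \<in> Z" "r \<in> D" by blast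
      then have "r * x \<in> Z" using idl[OF Z(1)] unfolding ideal_of_def submod_def by blast
      then show "r * x \<in> \<Union>C" using Z(1) by blast
    qed
    moreover have "\<Union>C \<subseteq> D" using idl unfolding ideal_of_def by blast
    moreover have "I \<subseteq> \<Union>C" using R0 CS unfolding S_def by blast
    moreover have "1 \<notin> \<Union>C" using CS unfolding S_def by blast
    ultimately show "\<Union>C \<in> S" unfolding S_def ideal_of_def by blast
  qed
  then obtain M where MS: "M \<in> S" and Mmax: "\<And>X. X \<in> S \<Longrightarrow> M \<subseteq> X \<Longrightarrow> X = M" by blast
  have M: "ideal_of D M" "I \<subseteq> M" "1 \<notin> M" using MS unfolding S_def by auto
  have "maximal_ideal D M" unfolding maximal_ideal_def
  proof (intro conjI allI impI)
    show "ideal_of D M" by (rule M(1))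
    show "M \<noteq> D" using M(3) subringD(2)[OF D] by blast
    fix J assume J: "ideal_of D J" "M \<subseteq> J"
    show "J = M \<or> J = D"
    proof (cases "1 \<in> J")
      case True then show ?thesis using ideal_one J(1) by blast
    next
      case False
      then have "J \<in> S" using J M unfolding S_def by blast
      then show ?thesis using Mmax J(2) by blast
    qed
  qed
  then show ?thesis using M(2) by blast
qed

lemma maximal_nonzero:
  assumes D: "subring D" and qf: "quotient_field_is_UNIV D" and DU: "D \<noteq> UNIV"
    and M: "maximal_ideal D M"
  shows "M \<noteq> {0}"
proof
  assume M0: "M = {0}"
  have inv: "inverse d \<in> D" if d: "d \<in> D" "d \<noteq> 0" for d
  proof -
    define J where "J = (\<lambda>r. r * d) ` D"
    have "submod D J" unfolding submod_def J_def
    proof (intro conjI ballI)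
      show "0 \<in> (\<lambda>r. r * d) ` D" using subringD(1)[OF D] by force
      fix x y assume "x \<in> (\<lambda>r. r * d) ` D" "y \<in> (\<lambda>r. r * d) ` D"
      then obtain a b where "a \<in> D" "b \<in> D" "x = a * d" "y = b * d" by blast
      then show "x + y \<in> (\<lambda>r. r * d) ` D" using subringD(3)[OF D]
        by (intro image_eqI[of _ _ "a + b"]) (auto simp: distrib_right)
    next
      fix r x assume "r \<in> D" "x \<in> (\<lambda>r. r * d) ` D"
      then obtain a where "a \<in> D" "x = a * d" "r \<in> D" by blast
      then show "r * x \<in> (\<lambda>r. r * d) ` D" using subringD(5)[OF D]
        by (intro image_eqI[of _ _ "r * a"]) (auto simp: mult.assoc)
    qed
    moreover have "J \<subseteq> D" unfolding J_def using subringD(5)[OF D] d by blast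
    ultimately have Ji: "ideal_of D J" unfolding ideal_of_def by blast
    have "0 \<in> J" unfolding J_def using subringD(1)[OF D] by force
    then have "M \<subseteq> J" using M0 by blast
    then have "J = M \<or> J = D" using M Ji unfolding maximal_ideal_def by blast
    moreover have "d \<in> J" unfolding J_def using subringD(2)[OF D] by force
    ultimately have "J = D" using M0 d by blast
    then have "1 \<in> J" using subringD(2)[OF D] by blast
    then obtain r where "r \<in> D" "1 = r * d" unfolding J_def by blast
    then show ?thesis using d by (metis inverse_unique mult.commute)
  qed
  have "\<forall>x. x \<in> D"
  proof
    fix x
    obtain a b where "a \<in> D" "b \<in> D" "b \<noteq> 0" "x = a / b" using qf unfolding quotient_field_is_UNIV_def by blast
    then show "x \<in> D" using inv subringD(5)[OF D] by (simp add: divide_inverse)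
  qed
  then show False using DU by blast
qed



lemma d_op_semistar: "semistar T (d_op T)"
  unfolding semistar_def d_op_def by simp

context
  fixes D :: "'a::field set" and st :: "'a set \<Rightarrow> 'a set"
  assumes D: "subring D" and st: "semistar D st"
begin

definition "Qc \<longleftrightarrow> (\<forall>I. ideal_of D I \<longrightarrow> fgsub D I \<longrightarrow> st I = st D \<longrightarrow> I = D)"

lemma nzD: "nzsub D D" by (rule nzsub_ring[OF D])

lemma fg_ideal_le: "ideal_of D I \<Longrightarrow> fgsub D I \<Longrightarrow> st I \<subseteq> st D"
  using semistarD(5)[OF st nzD fgsub_nzsub[OF D]] unfolding ideal_of_def by blast

lemma star_f_sub: "fgsub D G \<Longrightarrow> G \<subseteq> E \<Longrightarrow> st G \<subseteq> star_f D st E"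
  unfolding star_f_def by blast

lemma star_f_le: "E \<subseteq> D \<Longrightarrow> star_f D st E \<subseteq> st D"
  unfolding star_f_def using semistarD(5)[OF st nzD fgsub_nzsub[OF D]] by blast

lemma oneD: "1 \<in> st D"
  using semistarD(2)[OF st nzD] subringD(2)[OF D] by blast

lemma fg_ideal: "fgsub D G \<Longrightarrow> G \<subseteq> D \<Longrightarrow> ideal_of D G"
  unfolding ideal_of_def using fgsub_submod[OF D] by blast

lemma Q_linked: "Qc \<Longrightarrow> overring D T \<Longrightarrow> linked D st T st'"
  unfolding linked_def
proof (intro allI impI)
  fix F assume Q: Qc and T: "overring D T" and F: "fgsub D F" "F \<subseteq> D" "st F = st D"
  have "F = D" using Q F fg_ideal unfolding Qc_def by blast
  moreover have "rspan T D = T" using T subringD(2)[OF D] rspan_ring_overring unfolding overring_def by blast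
  ultimately show "st' (rspan T F) = st' T" by simp
qed

lemma Q_P6: "Qc \<Longrightarrow> ideal_of D I \<Longrightarrow> I \<noteq> {0} \<Longrightarrow> I \<noteq> D \<Longrightarrow> star_f D st I \<subset> st D"
proof -
  assume Q: Qc and I: "ideal_of D I" "I \<noteq> {0}" "I \<noteq> D"
  have le: "star_f D st I \<subseteq> st D" using star_f_le I unfolding ideal_of_def by blast
  moreover have "star_f D st I \<noteq> st D"
  proof
    assume "star_f D st I = st D"
    then have "1 \<in> star_f D st I" using oneD by simp
    then obtain G where G: "fgsub D G" "G \<subseteq> I" "1 \<in> st G" unfolding star_f_def by blast
    have GD: "G \<subseteq> D" using G I unfolding ideal_of_def by blast
    have "st G = st D" using one_in_star[OF D st fgsub_nzsub[OF D G(1)] GD G(3)] .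
    then have "G = D" using Q G(1) GD fg_ideal unfolding Qc_def by blast
    then show False using G(2) I unfolding ideal_of_def by blast
  qed
  ultimately show ?thesis by blast
qed

lemma P6_Q: "(\<forall>I. ideal_of D I \<longrightarrow> I \<noteq> {0} \<longrightarrow> I \<noteq> D \<longrightarrow> star_f D st I \<subset> st D) \<Longrightarrow> Qc"
  unfolding Qc_def
proof (intro allI impI)
  fix I assume P: "\<forall>I. ideal_of D I \<longrightarrow> I \<noteq> {0} \<longrightarrow> I \<noteq> D \<longrightarrow> star_f D st I \<subset> st D"
    and I: "ideal_of D I" "fgsub D I" "st I = st D"
  show "I = D"
  proof (rule ccontr)
    assume "I \<noteq> D"
    moreover have "I \<noteq> {0}" using I(2) unfolding fgsub_def by blast
    ultimately have "star_f D st I \<subset> st D" using P I by blast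
    moreover have "st I \<subseteq> star_f D st I" using star_f_sub[OF I(2)] by blast
    ultimately show False using I(3) by blast
  qed
qed

lemma P8_Q: "(\<forall>I. ideal_of D I \<longrightarrow> I \<noteq> {0} \<longrightarrow> I \<noteq> D \<longrightarrow>
          star_f D st (mprod D I (colon D I)) = st D \<longrightarrow> star_f D st I \<subset> st D) \<Longrightarrow> Qc"
  unfolding Qc_def
proof (intro allI impI)
  fix I assume P: "\<forall>I. ideal_of D I \<longrightarrow> I \<noteq> {0} \<longrightarrow> I \<noteq> D \<longrightarrow>
          star_f D st (mprod D I (colon D I)) = st D \<longrightarrow> star_f D st I \<subset> st D"
    and I: "ideal_of D I" "fgsub D I" "st I = st D"
  show "I = D"
  proof (rule ccontr)
    assume ne: "I \<noteq> D"
    have nz: "I \<noteq> {0}" using I(2) unfolding fgsub_def by blast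
    define P where "P = mprod D I (colon D I)"
    have ID: "I \<subseteq> D" using I(1) unfolding ideal_of_def by blast
    have PD: "P \<subseteq> D" unfolding P_def mprod_def
    proof (rule rspan_least[OF submod_ring[OF D]])
      show "{e * f |e f. e \<in> I \<and> f \<in> colon D I} \<subseteq> D"
        unfolding colon_def by (auto simp: mult.commute)
    qed
    have IP: "I \<subseteq> P"
    proof
      fix e assume e: "e \<in> I"
      have "1 \<in> colon D I" unfolding colon_def using ID by auto
      then have "e * 1 \<in> {e * f |e f. e \<in> I \<and> f \<in> colon D I}" using e by blast
      then show "e \<in> P" unfolding P_def mprod_def using rspan_incl[OF subringD(2)[OF D]] by fastforce
    qed
    have "star_f D st P = st D"
      using star_f_le[OF PD] star_f_sub[OF I(2) IP] I(3) by blast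
    then have "star_f D st I \<subset> st D" using P I nz ne unfolding P_def by blast
    moreover have "st I \<subseteq> star_f D st I" using star_f_sub[OF I(2)] by blast
    ultimately show False using I(3) by blast
  qed
qed

lemma P7_Q: "(\<forall>I. ideal_of D I \<longrightarrow> fgsub D I \<longrightarrow> I \<noteq> D \<longrightarrow> st I \<subset> st D) \<longleftrightarrow> Qc"
  unfolding Qc_def using fg_ideal_le by blast

lemma P2_Q: "(\<forall>T. overring D T \<longrightarrow> linked D st T (d_op T)) \<Longrightarrow> Qc"
  unfolding Qc_def
proof (intro allI impI)
  fix I assume P: "\<forall>T. overring D T \<longrightarrow> linked D st T (d_op T)"
    and I: "ideal_of D I" "fgsub D I" "st I = st D"
  have "overring D D" unfolding overring_def using D by blast
  then have "linked D st D (d_op D)" using P by blast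
  then have "rspan D I = D" using I unfolding linked_def d_op_def ideal_of_def by blast
  then show "I = D" using rspan_idem[OF D fgsub_submod[OF D I(2)]] by simp
qed

lemma P3_Q: "(\<forall>T. overring D T \<longrightarrow> linked D st T (t_op T)) \<Longrightarrow> Qc"
  unfolding Qc_def
proof (intro allI impI)
  fix I assume P: "\<forall>T. overring D T \<longrightarrow> linked D st T (t_op T)"
    and I: "ideal_of D I" "fgsub D I" "st I = st D"
  show "I = D"
  proof (rule ccontr)
    assume ne: "I \<noteq> D"
    obtain V g where V: "valuation_overring D V" "subring V" "g \<noteq> 0"
      "rspan V I = (\<lambda>e. g * e) ` V" "1 \<notin> rspan V I"
      using bad_val[OF D I(1,2) ne] by blast
    have ov: "overring D V" and val: "\<forall>x. x \<noteq> 0 \<longrightarrow> x \<in> V \<or> inverse x \<in> V"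
      using V(1) unfolding valuation_overring_def by auto
    have "linked D st V (t_op V)" using P ov by blast
    then have eq: "t_op V (rspan V I) = t_op V V" using I unfolding linked_def ideal_of_def by blast
    have "1 \<notin> t_op V (rspan V I)" by (rule t_op_not_one[OF V(2) val rspan_submod[OF V(2)] V(5)])
    then show False using eq t_op_one[OF V(2)] by simp
  qed
qed

lemma P4_Q: "(\<forall>V. valuation_overring D V \<longrightarrow> (\<exists>st'. semistar V st' \<and> st' V = V \<and> linked D st V st')) \<Longrightarrow> Qc"
  unfolding Qc_def
proof (intro allI impI)
  fix I assume P: "\<forall>V. valuation_overring D V \<longrightarrow> (\<exists>st'. semistar V st' \<and> st' V = V \<and> linked D st V st')"
    and I: "ideal_of D I" "fgsub D I" "st I = st D"
  show "I = D"
  proof (rule ccontr)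
    assume ne: "I \<noteq> D"
    obtain V g where V: "valuation_overring D V" "subring V" "g \<noteq> 0"
      "rspan V I = (\<lambda>e. g * e) ` V" "1 \<notin> rspan V I"
      using bad_val[OF D I(1,2) ne] by blast
    obtain st' where st': "semistar V st'" "st' V = V" "linked D st V st'" using P V(1) by blast
    have "st' (rspan V I) = st' V" using st'(3) I unfolding linked_def ideal_of_def by blast
    moreover have "st' ((\<lambda>e. g * e) ` V) = (\<lambda>e. g * e) ` st' V"
      using semistarD(4)[OF st'(1) nzsub_ring[OF V(2)] V(3)] .
    ultimately have "(\<lambda>e. g * e) ` V = V" using V(4) st'(2) by simp
    then have "1 \<in> rspan V I" using V(4) subringD(2)[OF V(2)] by simp
    then show False using V(5) by simp
  qed
qed

lemma P5_Q: "(\<forall>M. maximal_ideal D M \<longrightarrow> quasi_maximal D (star_f D st) M) \<Longrightarrow> Qc"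
  unfolding Qc_def
proof (intro allI impI)
  fix I assume P: "\<forall>M. maximal_ideal D M \<longrightarrow> quasi_maximal D (star_f D st) M"
    and I: "ideal_of D I" "fgsub D I" "st I = st D"
  show "I = D"
  proof (rule ccontr)
    assume ne: "I \<noteq> D"
    have "1 \<notin> I" using ideal_one I(1) ne by blast
    then obtain M where M: "maximal_ideal D M" "I \<subseteq> M" using maximal_exists[OF D I(1)] by blast
    have "star_f D st M \<inter> D = M" using P M(1) unfolding quasi_maximal_def quasi_ideal_def by blast
    moreover have "1 \<in> star_f D st M" using star_f_sub[OF I(2) M(2)] I(3) oneD by blast
    ultimately have "1 \<in> M" using subringD(2)[OF D] by blast
    then have "M = D" using ideal_one M(1) unfolding maximal_ideal_def by blast
    then show False using M(1) unfolding maximal_ideal_def by blast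
  qed
qed

lemma Q_P5:
  assumes Q: Qc and qf: "quotient_field_is_UNIV D" and DU: "D \<noteq> UNIV" and M: "maximal_ideal D M"
  shows "quasi_maximal D (star_f D st) M"
proof -
  have Mi: "ideal_of D M" and MD: "M \<noteq> D" using M unfolding maximal_ideal_def by auto
  have Ms: "submod D M" and MsD: "M \<subseteq> D" using Mi unfolding ideal_of_def by auto
  have M0: "M \<noteq> {0}" by (rule maximal_nonzero[OF D qf DU M])
  then obtain m' where m': "m' \<in> M" "m' \<noteq> 0" using submodD(1)[OF Ms] by blast
  have sub1: "M \<subseteq> star_f D st M"
  proof
    fix m assume m: "m \<in> M"
    define G where "G = rspan D {m, m'}"
    have "{m, m'} \<subseteq> G" unfolding G_def by (rule rspan_incl[OF subringD(2)[OF D]])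
    then have "G \<noteq> {0}" using m' by blast
    then have fgG: "fgsub D G" unfolding fgsub_def G_def by (intro conjI exI[of _ "{m, m'}"]) auto
    have GM: "G \<subseteq> M" unfolding G_def by (rule rspan_least[OF Ms]) (use m m'(1) in blast)
    have "G \<subseteq> st G" by (rule semistarD(2)[OF st fgsub_nzsub[OF D fgG]])
    then have "m \<in> st G" using \<open>{m, m'} \<subseteq> G\<close> by blast
    then show "m \<in> star_f D st M" using star_f_sub[OF fgG GM] by blast
  qed
  have sub2: "star_f D st M \<inter> D \<subseteq> M"
  proof
    fix x assume "x \<in> star_f D st M \<inter> D"
    then obtain G where x: "x \<in> D" "x \<in> st G" and G: "fgsub D G" "G \<subseteq> M" unfolding star_f_def by blast
    show "x \<in> M"
    proof (rule ccontr)
      assume xM: "x \<notin> M"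
      obtain B where B: "finite B" "G = rspan D B" "G \<noteq> {0}" using G(1) unfolding fgsub_def by blast
      define J where "J = {m + d * x | m d. m \<in> M \<and> d \<in> D}"
      have "submod D J" unfolding submod_def J_def
      proof (intro conjI ballI)
        show "0 \<in> {m + d * x |m d. m \<in> M \<and> d \<in> D}" using submodD(1)[OF Ms] subringD(1)[OF D] by force
        fix a b assume "a \<in> {m + d * x |m d. m \<in> M \<and> d \<in> D}" "b \<in> {m + d * x |m d. m \<in> M \<and> d \<in> D}"
        then obtain m1 d1 m2 d2 where "m1 \<in> M" "d1 \<in> D" "a = m1 + d1 * x" "m2 \<in> M" "d2 \<in> D" "b = m2 + d2 * x" by blast
        moreover have "a + b = (m1 + m2) + (d1 + d2) * x" using calculation by (simp add: algebra_simps)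
        ultimately show "a + b \<in> {m + d * x |m d. m \<in> M \<and> d \<in> D}" using submodD(2)[OF Ms] subringD(3)[OF D] by blast
      next
        fix r a assume "r \<in> D" "a \<in> {m + d * x |m d. m \<in> M \<and> d \<in> D}"
        then obtain m1 d1 where "m1 \<in> M" "d1 \<in> D" "a = m1 + d1 * x" "r \<in> D" by blast
        moreover have "r * a = r * m1 + (r * d1) * x" using calculation by (simp add: algebra_simps)
        ultimately show "r * a \<in> {m + d * x |m d. m \<in> M \<and> d \<in> D}" using submodD(3)[OF Ms] subringD(5)[OF D] by blast
      qed
      moreover have "J \<subseteq> D" unfolding J_def using MsD x(1) subringD(3,5)[OF D] by blast
      ultimately have Ji: "ideal_of D J" unfolding ideal_of_def by blast
      have "M \<subseteq> J" unfolding J_def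
      proof
        fix m assume "m \<in> M"
        then show "m \<in> {m + d * x |m d. m \<in> M \<and> d \<in> D}" using subringD(1)[OF D] by force
      qed
      moreover have "x \<in> J" unfolding J_def using submodD(1)[OF Ms] subringD(2)[OF D] by force
      ultimately have "J = D" using M Ji xM unfolding maximal_ideal_def by blast
      then have "1 \<in> J" using subringD(2)[OF D] by blast
      then obtain m0 d0 where md: "m0 \<in> M" "d0 \<in> D" "1 = m0 + d0 * x" unfolding J_def by blast
      define G' where "G' = rspan D (insert m0 B)"
      have BG: "B \<subseteq> G" unfolding B(2) by (rule rspan_incl[OF subringD(2)[OF D]])
      have GG': "G \<subseteq> G'" unfolding G'_def B(2) by (rule rspan_mono) blast
      have "G' \<noteq> {0}" using B(3) GG' submodD(1)[OF fgsub_submod[OF D G(1)]] by blast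
      then have fg': "fgsub D G'" unfolding fgsub_def G'_def using B(1) by (intro conjI exI[of _ "insert m0 B"]) auto
      have G'M: "G' \<subseteq> M" unfolding G'_def using rspan_least[OF Ms] md(1) BG G(2) by blast
      have nG': "nzsub D G'" by (rule fgsub_nzsub[OF D fg'])
      have "st G \<subseteq> st G'" using semistarD(5)[OF st nG' fgsub_nzsub[OF D G(1)] GG'] .
      then have xG': "x \<in> st G'" using x(2) by blast
      have "m0 \<in> st G'" using semistarD(2)[OF st nG'] rspan_incl[OF subringD(2)[OF D]] unfolding G'_def by blast
      moreover have "d0 * x \<in> st G'" using semistarD(1)[OF st nG'] xG' md(2) unfolding nzsub_def submod_def by blast
      ultimately have "1 \<in> st G'" using semistarD(1)[OF st nG'] md(3) unfolding nzsub_def submod_def by metis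
      then have "st G' = st D" using one_in_star[OF D st nG'] G'M MsD by blast
      then have "G' = D" using Q fg' fg_ideal G'M MsD unfolding Qc_def by blast
      then show False using G'M MsD MD by blast
    qed
  qed
  have "star_f D st M \<inter> D = M" using sub1 sub2 MsD by blast
  then have qi: "quasi_ideal D (star_f D st) M" unfolding quasi_ideal_def using Mi M0 by blast
  have mx: "\<forall>J. ideal_of D J \<longrightarrow> M \<subseteq> J \<longrightarrow> J = M \<or> J = D" using M unfolding maximal_ideal_def by blast
  show ?thesis unfolding quasi_maximal_def
  proof (intro conjI allI impI)
    show "quasi_ideal D (star_f D st) M" by (rule qi)
    show "M \<noteq> D" by (rule MD)
    fix J assume "quasi_ideal D (star_f D st) J" "J \<noteq> D" "M \<subseteq> J"
    then show "J = M" using mx unfolding quasi_ideal_def by blast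
  qed
qed

end



theorem theorem3p9:
  fixes D :: "'a::field set" and st :: "'a set \<Rightarrow> 'a set"
  assumes "subring D" and "quotient_field_is_UNIV D" and "D \<noteq> UNIV"
    and "semistar D st"
  shows
   "tfae [(\<forall>T st'. overring D T \<longrightarrow> semistar T st' \<longrightarrow> linked D st T st'),
     (\<forall>T. overring D T \<longrightarrow> linked D st T (d_op T)),
     (\<forall>T. overring D T \<longrightarrow> linked D st T (t_op T)),
     (\<forall>V. valuation_overring D V \<longrightarrow>
          (\<exists>st'. semistar V st' \<and> st' V = V \<and> linked D st V st')),
     (\<forall>M. maximal_ideal D M \<longrightarrow> quasi_maximal D (star_f D st) M),
     (\<forall>I. ideal_of D I \<longrightarrow> I \<noteq> {0} \<longrightarrow> I \<noteq> D \<longrightarrow> star_f D st I \<subset> st D),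
     (\<forall>I. ideal_of D I \<longrightarrow> fgsub D I \<longrightarrow> I \<noteq> D \<longrightarrow> st I \<subset> st D),
     (\<forall>I. ideal_of D I \<longrightarrow> I \<noteq> {0} \<longrightarrow> I \<noteq> D \<longrightarrow>
          star_f D st (mprod D I (colon D I)) = st D \<longrightarrow> star_f D st I \<subset> st D)]"
proof (rule tfae8[where q = "Qc D st"])
  note D = assms(1) and qf = assms(2) and DU = assms(3) and st = assms(4)
  show "(\<forall>T st'. overring D T \<longrightarrow> semistar T st' \<longrightarrow> linked D st T st') = Qc D st"
  proof
    assume "\<forall>T st'. overring D T \<longrightarrow> semistar T st' \<longrightarrow> linked D st T st'"
    then have "\<forall>T. overring D T \<longrightarrow> linked D st T (d_op T)" using d_op_semistar by blast
    then show "Qc D st" by (rule P2_Q[OF D st])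
  qed (use Q_linked[OF D st] in blast)
  show "(\<forall>T. overring D T \<longrightarrow> linked D st T (d_op T)) = Qc D st"
    using P2_Q[OF D st] Q_linked[OF D st] by blast
  show "(\<forall>T. overring D T \<longrightarrow> linked D st T (t_op T)) = Qc D st"
    using P3_Q[OF D st] Q_linked[OF D st] by blast
  show "(\<forall>V. valuation_overring D V \<longrightarrow> (\<exists>st'. semistar V st' \<and> st' V = V \<and> linked D st V st')) = Qc D st"
  proof
    assume "Qc D st"
    then show "\<forall>V. valuation_overring D V \<longrightarrow> (\<exists>st'. semistar V st' \<and> st' V = V \<and> linked D st V st')"
      using Q_linked[OF D st] d_op_semistar unfolding valuation_overring_def d_op_def
      by (metis d_op_def)
  qed (rule P4_Q[OF D st])
  show "(\<forall>M. maximal_ideal D M \<longrightarrow> quasi_maximal D (star_f D st) M) = Qc D st"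
    using P5_Q[OF D st] Q_P5[OF D st _ qf DU] by blast
  show "(\<forall>I. ideal_of D I \<longrightarrow> I \<noteq> {0} \<longrightarrow> I \<noteq> D \<longrightarrow> star_f D st I \<subset> st D) = Qc D st"
    using P6_Q[OF D st] Q_P6[OF D st] by blast
  show "(\<forall>I. ideal_of D I \<longrightarrow> fgsub D I \<longrightarrow> I \<noteq> D \<longrightarrow> st I \<subset> st D) = Qc D st"
    by (rule P7_Q[OF D st])
  show "(\<forall>I. ideal_of D I \<longrightarrow> I \<noteq> {0} \<longrightarrow> I \<noteq> D \<longrightarrow>
          star_f D st (mprod D I (colon D I)) = st D \<longrightarrow> star_f D st I \<subset> st D) = Qc D st"
    using P8_Q[OF D st] Q_P6[OF D st] by blast
qed


end
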